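(* Let $X$ be a complex Banach space and $1\leq p\leq\infty$. Then $(\Pi^{\mathcal{B}}_p(\mathbb{D},X),\pi^{\mathcal{B}}_p)$ is a Möbius-invariant space; that is, $\Pi^{\mathcal{B}}_p(\mathbb{D},X)\subseteq\mathcal{B}(\mathbb{D},X)$ and there is $c>0$ with $p_{\mathcal{B}}(f)\leq c\,\pi^{\mathcal{B}}_p(f)$ for all $f\in\Pi^{\mathcal{B}}_p(\mathbb{D},X)$, and for every $\phi\in\mathrm{Aut}(\mathbb{D})$ and $f\in\Pi^{\mathcal{B}}_p(\mathbb{D},X)$ we have $f\circ\phi\in\Pi^{\mathcal{B}}_p(\mathbb{D},X)$ and $\pi^{\mathcal{B}}_p(f\circ\phi)=\pi^{\mathcal{B}}_p(f)$.
   Context: $\mathbb{D}=\{z\in\mathbb{C}:|z|<1\}$; $\mathrm{Aut}(\mathbb{D})$ is the group of biholomorphic bijections of $\mathbb{D}$. For a complex Banach space $X$, $\mathcal{H}(\mathbb{D},X)$ is the space of holomorphic maps $\mathbb{D}\to X$; $p_{\mathcal{B}}(f)=\sup_{z\in\mathbb{D}}(1-|z|^2)\|f'(z)\|$; $\mathcal{B}(\mathbb{D},X)=\{f\in\mathcal{H}(\mathbb{D},X):p_{\mathcal{B}}(f)<\infty\}$; $\widehat{\mathcal{B}}(\mathbb{D})$ is the Banach space of holomorphic $g:\mathbb{D}\to\mathbb{C}$ with $g(0)=0$ and $p_{\mathcal{B}}(g)<\infty$, with norm $p_{\mathcal{B}}$ and closed unit ball $B_{\widehat{\mathcal{B}}(\mathbb{D})}$.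 For $1\leq p<\infty$, $f\in\mathcal{H}(\mathbb{D},X)$ is $p$-summing Bloch if there is $c\geq0$ with $\left(\sum_{i=1}^n|\lambda_i|^p\|f'(z_i)\|^p\right)^{1/p}\leq c\sup_{g\in B_{\widehat{\mathcal{B}}(\mathbb{D})}}\left(\sum_{i=1}^n|\lambda_i|^p|g'(z_i)|^p\right)^{1/p}$ for all $n\in\mathbb{N}$, $\lambda_i\in\mathbb{C}$, $z_i\in\mathbb{D}$; for $p=\infty$ the condition is $\max_i|\lambda_i|\|f'(z_i)\|\leq c\sup_{g\in B_{\widehat{\mathcal{B}}(\mathbb{D})}}\max_i|\lambda_i||g'(z_i)|$. The least such $c$ is $\pi^{\mathcal{B}}_p(f)$ (a seminorm), and $\Pi^{\mathcal{B}}_p(\mathbb{D},X)$ is the space of all $p$-summing Bloch maps $\mathbb{D}\to X$. *)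

theory Defs
  imports "HOL-Complex_Analysis.Complex_Analysis"
begin

text \<open>A complex Banach space is modelled as a real Banach space together with a
complex structure J (multiplication by i), compatible with the norm.\<close>

definition cscale :: "('a::real_vector \<Rightarrow> 'a) \<Rightarrow> complex \<Rightarrow> 'a \<Rightarrow> 'a" where
  "cscale J c x = Re c *\<^sub>R x + Im c *\<^sub>R J x"

definition complex_banach_structure :: "('a::banach \<Rightarrow> 'a) \<Rightarrow> bool" where
  "complex_banach_structure J \<longleftrightarrow> linear J \<and> (\<forall>x. J (J x) = - x) \<and>
     (\<forall>c x. norm (cscale J c x) = cmod c * norm x)"

abbreviation unit_disc :: "complex set" where
  "unit_disc \<equiv> ball 0 1"

definition holo_X :: "('a::banach \<Rightarrow> 'a) \<Rightarrow> (complex \<Rightarrow> 'a) \<Rightarrow> bool" where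
  "holo_X J f \<longleftrightarrow> (\<forall>z\<in>unit_disc. \<exists>v. (f has_derivative (\<lambda>h. cscale J h v)) (at z))"

definition cderiv_X :: "(complex \<Rightarrow> 'a::real_normed_vector) \<Rightarrow> complex \<Rightarrow> 'a" where
  "cderiv_X f z = frechet_derivative f (at z) 1"

definition bloch_X :: "('a::banach \<Rightarrow> 'a) \<Rightarrow> (complex \<Rightarrow> 'a) \<Rightarrow> bool" where
  "bloch_X J f \<longleftrightarrow> holo_X J f \<and>
     bdd_above ((\<lambda>z. (1 - (cmod z)\<^sup>2) * norm (cderiv_X f z)) ` unit_disc)"

definition p_B :: "(complex \<Rightarrow> 'a::real_normed_vector) \<Rightarrow> real" where
  "p_B f = (SUP z\<in>unit_disc. (1 - (cmod z)\<^sup>2) * norm (cderiv_X f z))"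

definition bloch_hat_ball :: "(complex \<Rightarrow> complex) set" where
  "bloch_hat_ball = {g. g holomorphic_on unit_disc \<and> g 0 = 0 \<and>
      (\<forall>z\<in>unit_disc. (1 - (cmod z)\<^sup>2) * cmod (deriv g z) \<le> 1)}"

definition psum_ineq :: "ereal \<Rightarrow> real \<Rightarrow> (complex \<Rightarrow> 'a::real_normed_vector) \<Rightarrow> bool" where
  "psum_ineq p c f \<longleftrightarrow>
    (if p = \<infinity> then
       (\<forall>n::nat. \<forall>lam::nat \<Rightarrow> complex. \<forall>zs::nat \<Rightarrow> complex.
          n \<ge> 1 \<longrightarrow> (\<forall>i<n. zs i \<in> unit_disc) \<longrightarrow>
          Max ((\<lambda>i. cmod (lam i) * norm (cderiv_X f (zs i))) ` {..<n})
            \<le> c * (SUP g\<in>bloch_hat_ball. Max ((\<lambda>i. cmod (lam i) * cmod (deriv g (zs i))) ` {..<n})))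
     else
       (\<forall>n::nat. \<forall>lam::nat \<Rightarrow> complex. \<forall>zs::nat \<Rightarrow> complex.
          (\<forall>i<n. zs i \<in> unit_disc) \<longrightarrow>
          (\<Sum>i<n. (cmod (lam i)) powr (real_of_ereal p) * (norm (cderiv_X f (zs i))) powr (real_of_ereal p))
              powr (1 / real_of_ereal p)
            \<le> c * (SUP g\<in>bloch_hat_ball.
                 (\<Sum>i<n. (cmod (lam i)) powr (real_of_ereal p) * (cmod (deriv g (zs i))) powr (real_of_ereal p))
                   powr (1 / real_of_ereal p))))"

definition p_summing_bloch :: "('a::banach \<Rightarrow> 'a) \<Rightarrow> ereal \<Rightarrow> (complex \<Rightarrow> 'a) \<Rightarrow> bool" where
  "p_summing_bloch J p f \<longleftrightarrow> holo_X J f \<and> (\<exists>c\<ge>0. psum_ineq p c f)"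

definition Pi_B :: "('a::banach \<Rightarrow> 'a) \<Rightarrow> ereal \<Rightarrow> (complex \<Rightarrow> 'a) set" where
  "Pi_B J p = {f. p_summing_bloch J p f}"

definition pi_B :: "ereal \<Rightarrow> (complex \<Rightarrow> 'a::real_normed_vector) \<Rightarrow> real" where
  "pi_B p f = Inf {c. c \<ge> 0 \<and> psum_ineq p c f}"

definition aut_disc :: "(complex \<Rightarrow> complex) \<Rightarrow> bool" where
  "aut_disc \<phi> \<longleftrightarrow> \<phi> holomorphic_on unit_disc \<and> bij_betw \<phi> unit_disc unit_disc \<and>
     (\<exists>\<psi>. \<psi> holomorphic_on unit_disc \<and> (\<forall>z\<in>unit_disc. \<psi> z \<in> unit_disc \<and> \<phi> (\<psi> z) = z \<and> \<psi> (\<phi> z) = z))"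

end

theory Submission
  imports Defs
begin

lemma moeb_deriv:
  assumes "norm w < 1" "norm z < 1"
  shows "(Moebius_function 0 w has_field_derivative (1 - cnj w * w)/(1 - cnj w * z)^2) (at z)"
proof -
  have nz: "1 - cnj w * z \<noteq> 0"
  proof
    assume "1 - cnj w * z = 0"
    then have "norm (cnj w * z) = 1" by (metis eq_iff_diff_eq_0 norm_one)
    moreover have "norm (cnj w * z) < 1" using norm_mult_less[of "cnj w" 1 z 1] assms by simp
    ultimately show False by simp
  qed
  show ?thesis unfolding Moebius_function_def
    apply (rule derivative_eq_intros refl)+
    using nz apply simp
    using nz by (simp add: field_simps power2_eq_square)
qed

lemma schwarz_pick:
  assumes holo: "\<phi> holomorphic_on unit_disc" and into: "\<And>z. z \<in> unit_disc \<Longrightarrow> \<phi> z \<in> unit_disc"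
    and a: "a \<in> unit_disc"
  shows "(1 - (cmod a)\<^sup>2) * cmod (deriv \<phi> a) \<le> 1 - (cmod (\<phi> a))\<^sup>2"
proof -
  define b where "b = \<phi> a"
  have b: "b \<in> unit_disc" using into a b_def by auto
  define Ma where "Ma = Moebius_function 0 (-a)"
  define Mb where "Mb = Moebius_function 0 b"
  define F where "F = Mb \<circ> \<phi> \<circ> Ma"
  have na: "norm a < 1" "norm (-a) < 1" using a by auto
  have nb: "norm b < 1" using b by auto
  have Ma_in: "Ma z \<in> unit_disc" if "z \<in> unit_disc" for z
    using Moebius_function_norm_lt_1[of "-a" z 0] na that unfolding Ma_def by auto
  have Mb_in: "Mb z \<in> unit_disc" if "z \<in> unit_disc" for z
    using Moebius_function_norm_lt_1[of b z 0] nb that unfolding Mb_def by auto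
  have Ma0: "Ma 0 = a" unfolding Ma_def Moebius_function_def by simp
  have Mbb: "Mb b = 0" unfolding Mb_def by (simp add: Moebius_function_eq_zero)
  have hMa: "Ma holomorphic_on unit_disc" using Moebius_function_holomorphic na unfolding Ma_def by auto
  have hMb: "Mb holomorphic_on unit_disc" using Moebius_function_holomorphic nb unfolding Mb_def by auto
  have h1: "Mb \<circ> \<phi> holomorphic_on unit_disc"
    by (rule holomorphic_on_compose_gen[OF holo hMb]) (use into in auto)
  have hF: "F holomorphic_on unit_disc"
    unfolding F_def by (rule holomorphic_on_compose_gen[OF hMa h1]) (use Ma_in in auto)
  have F0: "F 0 = 0" unfolding F_def using Ma0 Mbb b_def by simp
  have Fin: "norm (F z) < 1" if "norm z < 1" for z
    using Ma_in into Mb_in that unfolding F_def by auto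
  have sch: "norm (deriv F 0) \<le> 1"
    using Schwarz_Lemma(2)[OF hF F0 Fin, of 0] by simp
  have dMa: "(Ma has_field_derivative (1 - cnj a * a)) (at 0)"
    using moeb_deriv[of "-a" 0] na unfolding Ma_def by simp
  have dMb: "(Mb has_field_derivative (1 / (1 - cnj b * b))) (at b)"
  proof -
    have "norm (cnj b * b) < 1" using norm_mult_less[of "cnj b" 1 b 1] nb by simp
    then have "1 - cnj b * b \<noteq> 0" by (metis eq_iff_diff_eq_0 norm_one order_less_irrefl)
    then show ?thesis using moeb_deriv[of b b] nb unfolding Mb_def by (simp add: power2_eq_square)
  qed
  have dphi: "(\<phi> has_field_derivative deriv \<phi> a) (at a)"
    using holomorphic_derivI[OF holo _ a] by simp
  have "(F has_field_derivative (1 / (1 - cnj b * b)) * (deriv \<phi> a * (1 - cnj a * a))) (at 0)"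
    unfolding F_def o_assoc[symmetric]
    apply (rule DERIV_chain)
    using dMb b_def Ma0 apply simp
    apply (rule DERIV_chain)
    using dphi Ma0 apply simp
    using dMa by simp
  then have dF: "deriv F 0 = (1 / (1 - cnj b * b)) * (deriv \<phi> a * (1 - cnj a * a))"
    by (rule DERIV_imp_deriv)
  have ca: "1 - cnj a * a = of_real (1 - (cmod a)\<^sup>2)"
    using complex_norm_square[of a] by (simp add: mult.commute)
  have cb: "1 - cnj b * b = of_real (1 - (cmod b)\<^sup>2)"
    using complex_norm_square[of b] by (simp add: mult.commute)
  have pa: "1 - (cmod a)\<^sup>2 > 0" using na by (simp add: abs_square_less_1)
  have pb: "1 - (cmod b)\<^sup>2 > 0" using nb by (simp add: abs_square_less_1)
  have "norm (deriv F 0) = cmod (deriv \<phi> a) * (1 - (cmod a)\<^sup>2) / (1 - (cmod b)\<^sup>2)"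
    unfolding dF ca cb norm_mult norm_divide norm_of_real norm_one using pa pb by simp
  with sch pb have "cmod (deriv \<phi> a) * (1 - (cmod a)\<^sup>2) \<le> 1 - (cmod b)\<^sup>2"
    by (simp add: divide_le_eq)
  then show ?thesis by (simp add: b_def mult.commute)
qed

lemma cscale_mult:
  assumes "complex_banach_structure J"
  shows "cscale J h (cscale J a v) = cscale J (h * a) v"
proof -
  have lin: "linear J" and JJ: "\<And>x. J (J x) = - x" using assms unfolding complex_banach_structure_def by auto
  have add: "\<And>x y. J (x + y) = J x + J y" and sc: "\<And>r x. J (r *\<^sub>R x) = r *\<^sub>R J x"
    using lin unfolding linear_iff by auto
  have Jw: "J (Re a *\<^sub>R v + Im a *\<^sub>R J v) = Re a *\<^sub>R J v - Im a *\<^sub>R v"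
    unfolding add sc JJ by simp
  show ?thesis unfolding cscale_def Jw
    by (simp add: scaleR_add_right scaleR_diff_right scaleR_add_left scaleR_diff_left algebra_simps)
qed

lemma norm_cscale:
  assumes "complex_banach_structure J"
  shows "norm (cscale J c x) = cmod c * norm x"
  using assms unfolding complex_banach_structure_def by auto

lemma cderiv_unique:
  assumes "(f has_derivative (\<lambda>h. cscale J h v)) (at w)"
  shows "cderiv_X f w = v"
proof -
  have "(\<lambda>h. cscale J h v) = frechet_derivative f (at w)"
    using frechet_derivative_at[OF assms] .
  then have "cderiv_X f w = cscale J 1 v" unfolding cderiv_X_def by metis
  then show ?thesis by (simp add: cscale_def)
qed

lemma holo_comp:
  assumes J: "complex_banach_structure J" and hf: "holo_X J f"
    and holo: "\<phi> holomorphic_on unit_disc" and into: "\<And>z. z \<in> unit_disc \<Longrightarrow> \<phi> z \<in> unit_disc"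
  shows "holo_X J (f \<circ> \<phi>)"
    and "\<And>z. z \<in> unit_disc \<Longrightarrow> cderiv_X (f \<circ> \<phi>) z = cscale J (deriv \<phi> z) (cderiv_X f (\<phi> z))"
proof -
  have key: "((f \<circ> \<phi>) has_derivative (\<lambda>h. cscale J h (cscale J (deriv \<phi> z) (cderiv_X f (\<phi> z))))) (at z)"
    if z: "z \<in> unit_disc" for z
  proof -
    obtain v where v: "(f has_derivative (\<lambda>h. cscale J h v)) (at (\<phi> z))"
      using hf into[OF z] unfolding holo_X_def by blast
    have cv: "cderiv_X f (\<phi> z) = v" using cderiv_unique[OF v] .
    have dphi: "(\<phi> has_derivative (*) (deriv \<phi> z)) (at z)"
      using holomorphic_derivI[OF holo _ z, of UNIV] unfolding has_field_derivative_def by simp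
    have "((f \<circ> \<phi>) has_derivative (\<lambda>h. cscale J h v) \<circ> (*) (deriv \<phi> z)) (at z)"
      by (rule diff_chain_at[OF dphi v])
    moreover have "(\<lambda>h. cscale J h v) \<circ> (*) (deriv \<phi> z) = (\<lambda>h. cscale J h (cscale J (deriv \<phi> z) v))"
      using cscale_mult[OF J] by (auto simp: mult.commute)
    ultimately show ?thesis using cv by simp
  qed
  show "holo_X J (f \<circ> \<phi>)" unfolding holo_X_def using key by blast
  show "cderiv_X (f \<circ> \<phi>) z = cscale J (deriv \<phi> z) (cderiv_X f (\<phi> z))" if "z \<in> unit_disc" for z
    using cderiv_unique[OF key[OF that]] .
qed

lemma ball_bound:
  assumes "g \<in> bloch_hat_ball" "z \<in> unit_disc"
  shows "cmod (deriv g z) \<le> 1 / (1 - (cmod z)\<^sup>2)"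
proof -
  have pos: "1 - (cmod z)\<^sup>2 > 0" using assms(2) by (simp add: abs_square_less_1)
  have "(1 - (cmod z)\<^sup>2) * cmod (deriv g z) \<le> 1" using assms unfolding bloch_hat_ball_def by auto
  then show ?thesis using pos by (simp add: pos_le_divide_eq mult.commute)
qed

lemma ball_nonempty: "(\<lambda>_. 0) \<in> bloch_hat_ball"
  unfolding bloch_hat_ball_def by simp

lemma ball_invariant:
  assumes g: "g \<in> bloch_hat_ball" and holo: "\<phi> holomorphic_on unit_disc"
    and into: "\<And>z. z \<in> unit_disc \<Longrightarrow> \<phi> z \<in> unit_disc"
  shows "(\<lambda>z. g (\<phi> z) - g (\<phi> 0)) \<in> bloch_hat_ball"
    and "\<And>z. z \<in> unit_disc \<Longrightarrow> deriv (\<lambda>z. g (\<phi> z) - g (\<phi> 0)) z = deriv g (\<phi> z) * deriv \<phi> z"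
proof -
  have hg: "g holomorphic_on unit_disc" using g unfolding bloch_hat_ball_def by auto
  have d: "((\<lambda>z. g (\<phi> z) - g (\<phi> 0)) has_field_derivative deriv g (\<phi> z) * deriv \<phi> z) (at z)"
    if z: "z \<in> unit_disc" for z
  proof -
    have "((g \<circ> \<phi>) has_field_derivative deriv g (\<phi> z) * deriv \<phi> z) (at z)"
      apply (rule DERIV_chain)
      using holomorphic_derivI[OF hg _ into[OF z], of UNIV] apply simp
      using holomorphic_derivI[OF holo _ z, of UNIV] by simp
    then have "((\<lambda>z. g (\<phi> z)) has_field_derivative deriv g (\<phi> z) * deriv \<phi> z) (at z)"
      by (simp add: o_def)
    then show ?thesis by (rule derivative_eq_intros) auto
  qed
  show dd: "deriv (\<lambda>z. g (\<phi> z) - g (\<phi> 0)) z = deriv g (\<phi> z) * deriv \<phi> z" if "z \<in> unit_disc" for z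
    using DERIV_imp_deriv[OF d[OF that]] .
  have h1: "(g \<circ> \<phi>) holomorphic_on unit_disc"
    by (rule holomorphic_on_compose_gen[OF holo hg]) (use into in auto)
  then have h2: "(\<lambda>z. g (\<phi> z) - g (\<phi> 0)) holomorphic_on unit_disc"
    by (auto simp: o_def intro: holomorphic_intros)
  have bd: "(1 - (cmod z)\<^sup>2) * cmod (deriv (\<lambda>z. g (\<phi> z) - g (\<phi> 0)) z) \<le> 1" if z: "z \<in> unit_disc" for z
  proof -
    have sp: "(1 - (cmod z)\<^sup>2) * cmod (deriv \<phi> z) \<le> 1 - (cmod (\<phi> z))\<^sup>2"
      by (rule schwarz_pick[OF holo into z])
    have gb: "(1 - (cmod (\<phi> z))\<^sup>2) * cmod (deriv g (\<phi> z)) \<le> 1"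
      using g into[OF z] unfolding bloch_hat_ball_def by auto
    have "(1 - (cmod z)\<^sup>2) * cmod (deriv (\<lambda>z. g (\<phi> z) - g (\<phi> 0)) z)
        = ((1 - (cmod z)\<^sup>2) * cmod (deriv \<phi> z)) * cmod (deriv g (\<phi> z))"
      using dd[OF z] by (simp add: norm_mult)
    also have "\<dots> \<le> (1 - (cmod (\<phi> z))\<^sup>2) * cmod (deriv g (\<phi> z))"
      by (rule mult_right_mono[OF sp]) simp
    finally show ?thesis using gb by linarith
  qed
  show "(\<lambda>z. g (\<phi> z) - g (\<phi> 0)) \<in> bloch_hat_ball"
    unfolding bloch_hat_ball_def using h2 bd by auto
qed

lemma pp: "0 \<le> (x::real) \<Longrightarrow> q > 0 \<Longrightarrow> (x powr q) powr (1/q) = x"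
  by (simp add: powr_powr)

lemma sup_point:
  assumes z: "z \<in> unit_disc"
  shows "(SUP g\<in>bloch_hat_ball. cmod (deriv g z)) \<le> 1 / (1 - (cmod z)\<^sup>2)"
  by (rule cSUP_least) (use ball_nonempty ball_bound z in auto)

lemma psum_point:
  assumes c: "c \<ge> 0" and ps: "psum_ineq p c f" and p: "1 \<le> p" and z: "z \<in> unit_disc"
  shows "(1 - (cmod z)\<^sup>2) * norm (cderiv_X f z) \<le> c"
proof -
  have pos: "1 - (cmod z)\<^sup>2 > 0" using z by (simp add: abs_square_less_1)
  have "norm (cderiv_X f z) \<le> c * (SUP g\<in>bloch_hat_ball. cmod (deriv g z))"
  proof (cases "p = \<infinity>")
    case True
    have H: "\<forall>n::nat. \<forall>lam::nat \<Rightarrow> complex. \<forall>zs::nat \<Rightarrow> complex.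
          n \<ge> 1 \<longrightarrow> (\<forall>i<n. zs i \<in> unit_disc) \<longrightarrow>
          Max ((\<lambda>i. cmod (lam i) * norm (cderiv_X f (zs i))) ` {..<n})
            \<le> c * (SUP g\<in>bloch_hat_ball. Max ((\<lambda>i. cmod (lam i) * cmod (deriv g (zs i))) ` {..<n}))"
      using ps True unfolding psum_ineq_def by simp
    have "Max ((\<lambda>i. cmod 1 * norm (cderiv_X f z)) ` {..<1::nat})
            \<le> c * (SUP g\<in>bloch_hat_ball. Max ((\<lambda>i. cmod 1 * cmod (deriv g z)) ` {..<1::nat}))"
      by (rule H[rule_format]) (use z in auto)
    moreover have "{..<1::nat} = {0}" by auto
    ultimately show ?thesis by simp
  next
    case False
    define q where "q = real_of_ereal p"
    have q: "q \<ge> 1" using p False unfolding q_def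
      by (cases p) auto
    have "(\<Sum>i<(1::nat). cmod 1 powr q * norm (cderiv_X f z) powr q) powr (1/q)
       \<le> c * (SUP g\<in>bloch_hat_ball. (\<Sum>i<(1::nat). cmod 1 powr q * cmod (deriv g z) powr q) powr (1/q))"
    proof -
      have H: "\<forall>n::nat. \<forall>lam::nat \<Rightarrow> complex. \<forall>zs::nat \<Rightarrow> complex.
          (\<forall>i<n. zs i \<in> unit_disc) \<longrightarrow>
          (\<Sum>i<n. (cmod (lam i)) powr q * (norm (cderiv_X f (zs i))) powr q)
              powr (1 / q)
            \<le> c * (SUP g\<in>bloch_hat_ball.
                 (\<Sum>i<n. (cmod (lam i)) powr q * (cmod (deriv g (zs i))) powr q)
                   powr (1 / q))"
        using ps False unfolding psum_ineq_def q_def by simp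
      have zz: "\<forall>i<1::nat. (\<lambda>_::nat. z) i \<in> unit_disc" using z by simp
      show ?thesis
        using H[THEN spec[of _ 1], THEN spec[of _ "\<lambda>_::nat. 1::complex"], THEN spec[of _ "\<lambda>_::nat. z"], THEN mp, OF zz]
        by (simp add: lessThan_Suc)
    qed
    then show ?thesis using q by (simp add: pp)
  qed
  also have "\<dots> \<le> c * (1 / (1 - (cmod z)\<^sup>2))"
    by (rule mult_left_mono[OF sup_point[OF z] c])
  finally show ?thesis using pos by (simp add: pos_le_divide_eq mult.commute)
qed

lemma cderiv_local:
  assumes "\<And>w. w \<in> unit_disc \<Longrightarrow> f w = g w" "z \<in> unit_disc"
  shows "cderiv_X f z = cderiv_X g z"
proof -
  have "\<And>D. (f has_derivative D) (at z) \<longleftrightarrow> (g has_derivative D) (at z)"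
    using has_derivative_transform_within_open[of f _ z UNIV unit_disc g]
      has_derivative_transform_within_open[of g _ z UNIV unit_disc f] assms by auto
  then show ?thesis unfolding cderiv_X_def frechet_derivative_def by simp
qed

lemma psum_cong:
  assumes eq: "\<And>z. z \<in> unit_disc \<Longrightarrow> cderiv_X g z = cderiv_X f z" and ps: "psum_ineq p c f"
  shows "psum_ineq p c g"
proof (cases "p = \<infinity>")
  case True
  have H: "\<forall>n::nat. \<forall>lam::nat \<Rightarrow> complex. \<forall>zs::nat \<Rightarrow> complex.
          n \<ge> 1 \<longrightarrow> (\<forall>i<n. zs i \<in> unit_disc) \<longrightarrow>
          Max ((\<lambda>i. cmod (lam i) * norm (cderiv_X f (zs i))) ` {..<n})
            \<le> c * (SUP g\<in>bloch_hat_ball. Max ((\<lambda>i. cmod (lam i) * cmod (deriv g (zs i))) ` {..<n}))"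
    using ps True unfolding psum_ineq_def by simp
  have "\<forall>n::nat. \<forall>lam::nat \<Rightarrow> complex. \<forall>zs::nat \<Rightarrow> complex.
          n \<ge> 1 \<longrightarrow> (\<forall>i<n. zs i \<in> unit_disc) \<longrightarrow>
          Max ((\<lambda>i. cmod (lam i) * norm (cderiv_X g (zs i))) ` {..<n})
            \<le> c * (SUP g\<in>bloch_hat_ball. Max ((\<lambda>i. cmod (lam i) * cmod (deriv g (zs i))) ` {..<n}))"
  proof (intro allI impI)
    fix n :: nat and lam zs
    assume n: "n \<ge> 1" and zs: "\<forall>i<n. zs i \<in> unit_disc"
    have "(\<lambda>i. cmod (lam i) * norm (cderiv_X g (zs i))) ` {..<n} = (\<lambda>i. cmod (lam i) * norm (cderiv_X f (zs i))) ` {..<n}"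
      using zs eq by (auto intro!: image_cong)
    then show "Max ((\<lambda>i. cmod (lam i) * norm (cderiv_X g (zs i))) ` {..<n})
         \<le> c * (SUP g\<in>bloch_hat_ball. Max ((\<lambda>i. cmod (lam i) * cmod (deriv g (zs i))) ` {..<n}))"
      using H n zs by auto
  qed
  then show ?thesis using True unfolding psum_ineq_def by simp
next
  case False
  define q where "q = real_of_ereal p"
  have H: "\<forall>n::nat. \<forall>lam::nat \<Rightarrow> complex. \<forall>zs::nat \<Rightarrow> complex.
          (\<forall>i<n. zs i \<in> unit_disc) \<longrightarrow>
          (\<Sum>i<n. (cmod (lam i)) powr q * (norm (cderiv_X f (zs i))) powr q) powr (1 / q)
            \<le> c * (SUP g\<in>bloch_hat_ball.
                 (\<Sum>i<n. (cmod (lam i)) powr q * (cmod (deriv g (zs i))) powr q) powr (1 / q))"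
    using ps False unfolding psum_ineq_def q_def by simp
  have "\<forall>n::nat. \<forall>lam::nat \<Rightarrow> complex. \<forall>zs::nat \<Rightarrow> complex.
          (\<forall>i<n. zs i \<in> unit_disc) \<longrightarrow>
          (\<Sum>i<n. (cmod (lam i)) powr q * (norm (cderiv_X g (zs i))) powr q) powr (1 / q)
            \<le> c * (SUP g\<in>bloch_hat_ball.
                 (\<Sum>i<n. (cmod (lam i)) powr q * (cmod (deriv g (zs i))) powr q) powr (1 / q))"
  proof (intro allI impI)
    fix n :: nat and lam zs
    assume zs: "\<forall>i<n. zs i \<in> unit_disc"
    have "(\<Sum>i<n. cmod (lam i) powr q * norm (cderiv_X g (zs i)) powr q)
       = (\<Sum>i<n. cmod (lam i) powr q * norm (cderiv_X f (zs i)) powr q)"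
      using zs eq by (auto intro!: sum.cong)
    then show "(\<Sum>i<n. (cmod (lam i)) powr q * (norm (cderiv_X g (zs i))) powr q) powr (1 / q)
            \<le> c * (SUP g\<in>bloch_hat_ball.
                 (\<Sum>i<n. (cmod (lam i)) powr q * (cmod (deriv g (zs i))) powr q) powr (1 / q))"
      using H zs by auto
  qed
  then show ?thesis using False unfolding psum_ineq_def q_def by simp
qed

lemma psum_transfer:
  assumes J: "complex_banach_structure J" and hf: "holo_X J f"
    and holo: "\<phi> holomorphic_on unit_disc" and into: "\<And>z. z \<in> unit_disc \<Longrightarrow> \<phi> z \<in> unit_disc"
    and c: "c \<ge> 0" and ps: "psum_ineq p c f" and p: "1 \<le> p"
  shows "psum_ineq p c (f \<circ> \<phi>)"
proof -
  have nd: "norm (cderiv_X (f \<circ> \<phi>) z) = cmod (deriv \<phi> z) * norm (cderiv_X f (\<phi> z))" if "z \<in> unit_disc" for z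
    using holo_comp(2)[OF J hf holo into that] norm_cscale[OF J] by simp
  define hh where "hh g = (\<lambda>z. g (\<phi> z) - g (\<phi> 0))" for g :: "complex \<Rightarrow> complex"
  have hh_in: "hh g \<in> bloch_hat_ball" if "g \<in> bloch_hat_ball" for g
    unfolding hh_def using ball_invariant(1)[OF that holo into] .
  have hh_d: "cmod (deriv (hh g) z) = cmod (deriv g (\<phi> z)) * cmod (deriv \<phi> z)"
    if "g \<in> bloch_hat_ball" "z \<in> unit_disc" for g z
    unfolding hh_def using ball_invariant(2)[OF that(1) holo into that(2)] by (simp add: norm_mult)
  have Bpos: "1 / (1 - (cmod z)\<^sup>2) > 0" if "z \<in> unit_disc" for z
    using that by (simp add: abs_square_less_1)
  show ?thesis
  proof (cases "p = \<infinity>")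
    case True
    have H: "\<forall>n::nat. \<forall>lam::nat \<Rightarrow> complex. \<forall>zs::nat \<Rightarrow> complex.
          n \<ge> 1 \<longrightarrow> (\<forall>i<n. zs i \<in> unit_disc) \<longrightarrow>
          Max ((\<lambda>i. cmod (lam i) * norm (cderiv_X f (zs i))) ` {..<n})
            \<le> c * (SUP g\<in>bloch_hat_ball. Max ((\<lambda>i. cmod (lam i) * cmod (deriv g (zs i))) ` {..<n}))"
      using ps True unfolding psum_ineq_def by simp
    have "\<forall>n::nat. \<forall>lam::nat \<Rightarrow> complex. \<forall>zs::nat \<Rightarrow> complex.
          n \<ge> 1 \<longrightarrow> (\<forall>i<n. zs i \<in> unit_disc) \<longrightarrow>
          Max ((\<lambda>i. cmod (lam i) * norm (cderiv_X (f \<circ> \<phi>) (zs i))) ` {..<n})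
            \<le> c * (SUP g\<in>bloch_hat_ball. Max ((\<lambda>i. cmod (lam i) * cmod (deriv g (zs i))) ` {..<n}))"
    proof (intro allI impI)
      fix n :: nat and lam zs
      assume n: "n \<ge> 1" and zs: "\<forall>i<n. zs i \<in> unit_disc"
      define lam' where "lam' i = lam i * deriv \<phi> (zs i)" for i
      define zs' where "zs' i = \<phi> (zs i)" for i
      have zs': "\<forall>i<n. zs' i \<in> unit_disc" using zs into unfolding zs'_def by auto
      have ne: "{..<n} \<noteq> {}" using n by (auto simp: lessThan_empty_iff)
      have e1: "(\<lambda>i. cmod (lam i) * norm (cderiv_X (f \<circ> \<phi>) (zs i))) ` {..<n}
          = (\<lambda>i. cmod (lam' i) * norm (cderiv_X f (zs' i))) ` {..<n}"
        using zs nd unfolding lam'_def zs'_def by (auto intro!: image_cong simp: norm_mult)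
      have bdd: "bdd_above ((\<lambda>g. Max ((\<lambda>i. cmod (lam i) * cmod (deriv g (zs i))) ` {..<n})) ` bloch_hat_ball)"
      proof (rule bdd_aboveI2)
        fix g assume g: "g \<in> bloch_hat_ball"
        show "Max ((\<lambda>i. cmod (lam i) * cmod (deriv g (zs i))) ` {..<n})
              \<le> (\<Sum>i<n. cmod (lam i) * (1 / (1 - (cmod (zs i))\<^sup>2)))"
        proof (subst Max_le_iff, simp, use ne in simp, safe)
          fix i assume i: "i < n"
          have "cmod (lam i) * cmod (deriv g (zs i)) \<le> cmod (lam i) * (1 / (1 - (cmod (zs i))\<^sup>2))"
            by (rule mult_left_mono[OF ball_bound[OF g]]) (use zs i in auto)
          also have "\<dots> \<le> (\<Sum>i<n. cmod (lam i) * (1 / (1 - (cmod (zs i))\<^sup>2)))"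
            by (rule member_le_sum) (use i zs in \<open>auto intro!: divide_nonneg_nonneg simp: abs_square_le_1 less_imp_le\<close>)
          finally show "cmod (lam i) * cmod (deriv g (zs i)) \<le> (\<Sum>i<n. cmod (lam i) * (1 / (1 - (cmod (zs i))\<^sup>2)))" .
        qed
      qed
      have "Max ((\<lambda>i. cmod (lam i) * norm (cderiv_X (f \<circ> \<phi>) (zs i))) ` {..<n})
          \<le> c * (SUP g\<in>bloch_hat_ball. Max ((\<lambda>i. cmod (lam' i) * cmod (deriv g (zs' i))) ` {..<n}))"
        unfolding e1 using H n zs' by blast
      also have "\<dots> \<le> c * (SUP g\<in>bloch_hat_ball. Max ((\<lambda>i. cmod (lam i) * cmod (deriv g (zs i))) ` {..<n}))"
      proof (rule mult_left_mono[OF _ c], rule cSUP_mono[OF _ bdd])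
        show "bloch_hat_ball \<noteq> {}" using ball_nonempty by auto
        fix g assume g: "g \<in> bloch_hat_ball"
        have "(\<lambda>i. cmod (lam' i) * cmod (deriv g (zs' i))) ` {..<n}
            = (\<lambda>i. cmod (lam i) * cmod (deriv (hh g) (zs i))) ` {..<n}"
          using zs hh_d[OF g] unfolding lam'_def zs'_def by (auto intro!: image_cong simp: norm_mult)
        then show "\<exists>m\<in>bloch_hat_ball. Max ((\<lambda>i. cmod (lam' i) * cmod (deriv g (zs' i))) ` {..<n})
             \<le> Max ((\<lambda>i. cmod (lam i) * cmod (deriv m (zs i))) ` {..<n})"
          using hh_in[OF g] by (intro bexI[of _ "hh g"]) auto
      qed
      finally show "Max ((\<lambda>i. cmod (lam i) * norm (cderiv_X (f \<circ> \<phi>) (zs i))) ` {..<n})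
            \<le> c * (SUP g\<in>bloch_hat_ball. Max ((\<lambda>i. cmod (lam i) * cmod (deriv g (zs i))) ` {..<n}))" .
    qed
    then show ?thesis using True unfolding psum_ineq_def by simp
  next
    case False
    define q where "q = real_of_ereal p"
    have q: "q \<ge> 1" using p False unfolding q_def by (cases p) auto
    have H: "\<forall>n::nat. \<forall>lam::nat \<Rightarrow> complex. \<forall>zs::nat \<Rightarrow> complex.
          (\<forall>i<n. zs i \<in> unit_disc) \<longrightarrow>
          (\<Sum>i<n. (cmod (lam i)) powr q * (norm (cderiv_X f (zs i))) powr q) powr (1 / q)
            \<le> c * (SUP g\<in>bloch_hat_ball.
                 (\<Sum>i<n. (cmod (lam i)) powr q * (cmod (deriv g (zs i))) powr q) powr (1 / q))"
      using ps False unfolding psum_ineq_def q_def by simp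
    have "\<forall>n::nat. \<forall>lam::nat \<Rightarrow> complex. \<forall>zs::nat \<Rightarrow> complex.
          (\<forall>i<n. zs i \<in> unit_disc) \<longrightarrow>
          (\<Sum>i<n. (cmod (lam i)) powr q * (norm (cderiv_X (f \<circ> \<phi>) (zs i))) powr q) powr (1 / q)
            \<le> c * (SUP g\<in>bloch_hat_ball.
                 (\<Sum>i<n. (cmod (lam i)) powr q * (cmod (deriv g (zs i))) powr q) powr (1 / q))"
    proof (intro allI impI)
      fix n :: nat and lam zs
      assume zs: "\<forall>i<n. zs i \<in> unit_disc"
      define lam' where "lam' i = lam i * deriv \<phi> (zs i)" for i
      define zs' where "zs' i = \<phi> (zs i)" for i
      have zs': "\<forall>i<n. zs' i \<in> unit_disc" using zs into unfolding zs'_def by auto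
      have pm: "a powr q * (b * d) powr q = (a * b) powr q * d powr q" if "a \<ge> 0" "b \<ge> 0" "d \<ge> 0" for a b d :: real
        using that by (simp add: powr_mult mult_ac)
      have e1: "(\<Sum>i<n. (cmod (lam i)) powr q * (norm (cderiv_X (f \<circ> \<phi>) (zs i))) powr q)
          = (\<Sum>i<n. (cmod (lam' i)) powr q * (norm (cderiv_X f (zs' i))) powr q)"
        using zs nd unfolding lam'_def zs'_def by (auto intro!: sum.cong simp: norm_mult pm)
      have bdd: "bdd_above ((\<lambda>g. (\<Sum>i<n. (cmod (lam i)) powr q * (cmod (deriv g (zs i))) powr q) powr (1 / q)) ` bloch_hat_ball)"
      proof (rule bdd_aboveI2)
        fix g assume g: "g \<in> bloch_hat_ball"
        show "(\<Sum>i<n. (cmod (lam i)) powr q * (cmod (deriv g (zs i))) powr q) powr (1 / q)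
              \<le> (\<Sum>i<n. (cmod (lam i)) powr q * (1 / (1 - (cmod (zs i))\<^sup>2)) powr q) powr (1 / q)"
        proof (rule powr_mono2)
          show "0 \<le> 1 / q" using q by simp
          show "0 \<le> (\<Sum>i<n. (cmod (lam i)) powr q * (cmod (deriv g (zs i))) powr q)"
            by (intro sum_nonneg) simp
          show "(\<Sum>i<n. (cmod (lam i)) powr q * (cmod (deriv g (zs i))) powr q)
              \<le> (\<Sum>i<n. (cmod (lam i)) powr q * (1 / (1 - (cmod (zs i))\<^sup>2)) powr q)"
          proof (rule sum_mono, rule mult_left_mono)
            fix i assume i: "i \<in> {..<n}"
            show "cmod (deriv g (zs i)) powr q \<le> (1 / (1 - (cmod (zs i))\<^sup>2)) powr q"
              by (rule powr_mono2) (use q ball_bound[OF g] zs i in auto)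
          qed simp
        qed
      qed
      have "(\<Sum>i<n. (cmod (lam i)) powr q * (norm (cderiv_X (f \<circ> \<phi>) (zs i))) powr q) powr (1 / q)
          \<le> c * (SUP g\<in>bloch_hat_ball. (\<Sum>i<n. (cmod (lam' i)) powr q * (cmod (deriv g (zs' i))) powr q) powr (1 / q))"
        unfolding e1 using H zs' by blast
      also have "\<dots> \<le> c * (SUP g\<in>bloch_hat_ball. (\<Sum>i<n. (cmod (lam i)) powr q * (cmod (deriv g (zs i))) powr q) powr (1 / q))"
      proof (rule mult_left_mono[OF _ c], rule cSUP_mono[OF _ bdd])
        show "bloch_hat_ball \<noteq> {}" using ball_nonempty by auto
        fix g assume g: "g \<in> bloch_hat_ball"
        have "(\<Sum>i<n. (cmod (lam' i)) powr q * (cmod (deriv g (zs' i))) powr q)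
            = (\<Sum>i<n. (cmod (lam i)) powr q * (cmod (deriv (hh g) (zs i))) powr q)"
        proof (rule sum.cong[OF refl])
          fix i assume i: "i \<in> {..<n}"
          then have zi: "zs i \<in> unit_disc" using zs by auto
          show "(cmod (lam' i)) powr q * (cmod (deriv g (zs' i))) powr q
              = (cmod (lam i)) powr q * (cmod (deriv (hh g) (zs i))) powr q"
            unfolding lam'_def zs'_def hh_d[OF g zi] by (simp add: norm_mult powr_mult mult_ac)
        qed
        then show "\<exists>m\<in>bloch_hat_ball. (\<Sum>i<n. (cmod (lam' i)) powr q * (cmod (deriv g (zs' i))) powr q) powr (1 / q)
             \<le> (\<Sum>i<n. (cmod (lam i)) powr q * (cmod (deriv m (zs i))) powr q) powr (1 / q)"
          using hh_in[OF g] by (intro bexI[of _ "hh g"]) auto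
      qed
      finally show "(\<Sum>i<n. (cmod (lam i)) powr q * (norm (cderiv_X (f \<circ> \<phi>) (zs i))) powr q) powr (1 / q)
            \<le> c * (SUP g\<in>bloch_hat_ball.
                 (\<Sum>i<n. (cmod (lam i)) powr q * (cmod (deriv g (zs i))) powr q) powr (1 / q))" .
    qed
    then show ?thesis using False unfolding psum_ineq_def q_def by simp
  qed
qed

theorem proposition1p3:
  fixes J :: "'a::banach \<Rightarrow> 'a" and p :: ereal
  assumes "complex_banach_structure J"
    and "1 \<le> p"
  shows "(\<forall>f\<in>Pi_B J p. bloch_X J f)
       \<and> (\<exists>c>0. \<forall>f\<in>Pi_B J p. p_B f \<le> c * pi_B p f)
       \<and> (\<forall>\<phi>. aut_disc \<phi> \<longrightarrow> (\<forall>f\<in>Pi_B J p. f \<circ> \<phi> \<in> Pi_B J p \<and> pi_B p (f \<circ> \<phi>) = pi_B p f))"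
proof (intro conjI)
  note J = assms(1) and p = assms(2)
  show "\<forall>f\<in>Pi_B J p. bloch_X J f"
  proof
    fix f assume "f \<in> Pi_B J p"
    then obtain c where h: "holo_X J f" and c: "c \<ge> 0" "psum_ineq p c f"
      unfolding Pi_B_def p_summing_bloch_def by auto
    show "bloch_X J f" unfolding bloch_X_def
      using h psum_point[OF c p] by (auto intro!: bdd_aboveI2)
  qed
  show "\<exists>c>0. \<forall>f\<in>Pi_B J p. p_B f \<le> c * pi_B p f"
  proof (intro exI[of _ 1] conjI ballI)
    fix f assume "f \<in> Pi_B J p"
    then obtain c where c: "c \<ge> 0" "psum_ineq p c f"
      unfolding Pi_B_def p_summing_bloch_def by auto
    have "p_B f \<le> pi_B p f"
      unfolding p_B_def pi_B_def
    proof (rule cSUP_least)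
      show "unit_disc \<noteq> {}" by (auto intro: exI[of _ 0])
      fix z :: complex assume z: "z \<in> unit_disc"
      show "(1 - (cmod z)\<^sup>2) * norm (cderiv_X f z) \<le> Inf {c. 0 \<le> c \<and> psum_ineq p c f}"
        by (rule cInf_greatest) (use c psum_point p z in auto)
    qed
    then show "p_B f \<le> 1 * pi_B p f" by simp
  qed simp
  show "\<forall>\<phi>. aut_disc \<phi> \<longrightarrow> (\<forall>f\<in>Pi_B J p. f \<circ> \<phi> \<in> Pi_B J p \<and> pi_B p (f \<circ> \<phi>) = pi_B p f)"
  proof (intro allI impI ballI)
    fix \<phi> f assume aut: "aut_disc \<phi>" and f: "f \<in> Pi_B J p"
    obtain \<psi> where hphi: "\<phi> holomorphic_on unit_disc" and bij: "bij_betw \<phi> unit_disc unit_disc"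
      and hpsi: "\<psi> holomorphic_on unit_disc"
      and inv: "\<And>z. z \<in> unit_disc \<Longrightarrow> \<psi> z \<in> unit_disc \<and> \<phi> (\<psi> z) = z \<and> \<psi> (\<phi> z) = z"
      using aut unfolding aut_disc_def by blast
    have intophi: "\<phi> z \<in> unit_disc" if "z \<in> unit_disc" for z
      using bij that unfolding bij_betw_def by auto
    have intopsi: "\<psi> z \<in> unit_disc" if "z \<in> unit_disc" for z using inv that by auto
    have hf: "holo_X J f" and cf: "\<exists>c\<ge>0. psum_ineq p c f"
      using f unfolding Pi_B_def p_summing_bloch_def by auto
    have hfp: "holo_X J (f \<circ> \<phi>)" by (rule holo_comp(1)[OF J hf hphi intophi])
    have S1: "{c. 0 \<le> c \<and> psum_ineq p c f} \<subseteq> {c. 0 \<le> c \<and> psum_ineq p c (f \<circ> \<phi>)}"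
      using psum_transfer[OF J hf hphi intophi _ _ p] by auto
    have S2: "{c. 0 \<le> c \<and> psum_ineq p c (f \<circ> \<phi>)} \<subseteq> {c. 0 \<le> c \<and> psum_ineq p c f}"
    proof safe
      fix c :: real assume c: "0 \<le> c" "psum_ineq p c (f \<circ> \<phi>)"
      have "psum_ineq p c ((f \<circ> \<phi>) \<circ> \<psi>)"
        by (rule psum_transfer[OF J hfp hpsi intopsi c p])
      moreover have "cderiv_X f z = cderiv_X ((f \<circ> \<phi>) \<circ> \<psi>) z" if "z \<in> unit_disc" for z
        by (rule cderiv_local[OF _ that]) (use inv in auto)
      ultimately show "psum_ineq p c f" by (rule psum_cong[rotated])
    qed
    have S: "{c. 0 \<le> c \<and> psum_ineq p c (f \<circ> \<phi>)} = {c. 0 \<le> c \<and> psum_ineq p c f}"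
      using S1 S2 by blast
    show "f \<circ> \<phi> \<in> Pi_B J p \<and> pi_B p (f \<circ> \<phi>) = pi_B p f"
      unfolding pi_B_def S using hfp cf S1 unfolding Pi_B_def p_summing_bloch_def by auto
  qed
qed

end
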